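(* Let $V\colon\mathbb{R}^3\to S^2$ define a line fibration of $\mathbb{R}^3$. If the differential $\mathrm{d}_{p_0}V$ has rank $2$ at some point $p_0\in\mathbb{R}^3$, then the line fibration contains no line $\ell\neq\ell_{p_0}$ that is parallel to $\ell_{p_0}$. In particular, if $\mathrm{d}_pV$ has rank $2$ at every point $p$ (the fibration is non-degenerate), then no two distinct lines of the fibration are parallel (the fibration is skew). *)

theory Defs
  imports "HOL-Analysis.Analysis"
begin

definition pd :: "3 \<Rightarrow> (real^3 \<Rightarrow> real) \<Rightarrow> real^3 \<Rightarrow> real" where
  "pd i f x = deriv (\<lambda>t. f (x + t *\<^sub>R axis i 1)) 0"

definition smooth_scalar :: "(real^3 \<Rightarrow> real) \<Rightarrow> bool" where
  "smooth_scalar f \<longleftrightarrow>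
     (\<forall>is. continuous_on UNIV (foldr pd is f) \<and>
           (\<forall>i x. (\<lambda>t. foldr pd is f (x + t *\<^sub>R axis i 1)) differentiable (at 0)))"

definition smooth_map :: "(real^3 \<Rightarrow> real^3) \<Rightarrow> bool" where
  "smooth_map V \<longleftrightarrow> (\<forall>k. smooth_scalar (\<lambda>x. V x $ k))"

definition fline :: "(real^3 \<Rightarrow> real^3) \<Rightarrow> real^3 \<Rightarrow> (real^3) set" where
  "fline V p = {p + t *\<^sub>R V p | t. True}"

text \<open>V : R^3 -> S^2 (smooth) defines a line fibration: the lines l_p partition R^3,
  i.e. whenever q lies on l_p, the line l_q is l_p.\<close>
definition line_fibration :: "(real^3 \<Rightarrow> real^3) \<Rightarrow> bool" where
  "line_fibration V \<longleftrightarrow> smooth_map V \<and> (\<forall>p. norm (V p) = 1) \<and>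
     (\<forall>p q. q \<in> fline V p \<longrightarrow> fline V q = fline V p)"

definition parallel_dirs :: "real^3 \<Rightarrow> real^3 \<Rightarrow> bool" where
  "parallel_dirs u v \<longleftrightarrow> u = v \<or> u = - v"

end

theory Submission
  imports Defs
begin

lemma V_cont:
  assumes "line_fibration V"
  shows "continuous_on UNIV V"
proof -
  have "\<And>k. continuous_on UNIV (\<lambda>x. V x $ k)"
    using assms unfolding line_fibration_def smooth_map_def smooth_scalar_def
    by (metis foldr_Nil id_apply)
  then have "continuous_on UNIV (\<lambda>x. \<chi> k. V x $ k)"
    by (intro continuous_on_vec_lambda) auto
  then show ?thesis by simp
qed

lemma no_parallel:
  fixes V :: "real^3 \<Rightarrow> real^3"
  assumes lfib: "line_fibration V" and dV: "(V has_derivative D) (at p0)"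
    and dimD: "dim (range D) = 2"
    and ne: "fline V q \<noteq> fline V p0" and par: "parallel_dirs (V q) (V p0)"
  shows False
proof -
  define u where "u = V p0"
  have unit: "\<And>x. norm (V x) = 1" using lfib unfolding line_fibration_def by auto
  have uu: "u \<bullet> u = 1" using unit[of p0] unfolding u_def by (simp add: norm_eq_1)
  have fl: "\<And>p q. q \<in> fline V p \<Longrightarrow> fline V q = fline V p"
    using lfib unfolding line_fibration_def by auto
  have blD: "bounded_linear D" using dV by (simp add: has_derivative_def)
  then have linD: "linear D" by (simp add: bounded_linear.linear)
  have ortho: "\<And>h. u \<bullet> D h = 0"
  proof -
    have d1: "((\<lambda>x. V x \<bullet> V x) has_derivative (\<lambda>h. V p0 \<bullet> D h + D h \<bullet> V p0)) (at p0)"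
      using dV dV by (rule has_derivative_inner)
    have "(\<lambda>x. V x \<bullet> V x) = (\<lambda>x. 1)" using unit by (simp add: norm_eq_1)
    then have d2: "((\<lambda>x. V x \<bullet> V x) has_derivative (\<lambda>h. 0)) (at p0)" by simp
    have "(\<lambda>h. V p0 \<bullet> D h + D h \<bullet> V p0) = (\<lambda>h. 0)"
      using has_derivative_unique[OF d1 d2] .
    then show "\<And>h. u \<bullet> D h = 0" unfolding u_def by (metis inner_commute mult_2 mult_eq_0_iff zero_neq_numeral)
  qed
  have u0: "u \<noteq> 0" using uu by auto
  have rangeD: "range D = {x. u \<bullet> x = 0}"
  proof (rule subspace_dim_equal)
    show "subspace (range D)" using linD by (simp add: subspace_UNIV linear_subspace_image)
    show "subspace {x. u \<bullet> x = 0}" by (rule subspace_hyperplane)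
    show "range D \<subseteq> {x. u \<bullet> x = 0}" using ortho by auto
    show "dim {x. u \<bullet> x = 0} \<le> dim (range D)" using dimD dim_hyperplane[OF u0] by simp
  qed
  obtain R where linR: "linear R" and RD: "\<And>z. z \<in> range D \<Longrightarrow> D (R z) = z"
    using linear_exists_right_inverse_on[OF linD subspace_UNIV] by auto
  obtain KR where KR: "KR > 0" "\<And>z. norm (R z) \<le> KR * norm z"
    using linear_bounded_pos[OF linR] by auto
  define P where "P = (\<lambda>v::real^3. v - (u \<bullet> v) *\<^sub>R u)"
  have P_add: "\<And>a b. P (a + b) = P a + P b" unfolding P_def by (simp add: inner_add_right algebra_simps)
  have P_diff: "\<And>a b. P (a - b) = P a - P b" unfolding P_def by (simp add: inner_diff_right algebra_simps)
  have P_scale: "\<And>c a. P (c *\<^sub>R a) = c *\<^sub>R P a" unfolding P_def by (simp add: algebra_simps)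
  have P_u: "P u = 0" unfolding P_def using uu by simp
  have P_orth: "\<And>v. u \<bullet> P v = 0" unfolding P_def using uu by (simp add: inner_diff_right)
  have P_fix: "\<And>v. u \<bullet> v = 0 \<Longrightarrow> P v = v" unfolding P_def by simp
  have P_norm: "\<And>v. norm (P v) \<le> norm v"
  proof -
    fix v
    have "norm (P v) ^ 2 = norm v ^ 2 - (u \<bullet> v)^2"
      unfolding P_def power2_norm_eq_inner using uu
      by (simp add: inner_diff_left inner_diff_right inner_commute power2_eq_square algebra_simps)
    then have "norm (P v) ^ 2 \<le> norm v ^ 2" by simp
    then show "norm (P v) \<le> norm v" by (simp add: power_mono_iff)
  qed
  have P_zero: "\<And>v. P v = 0 \<Longrightarrow> v = (u \<bullet> v) *\<^sub>R u" unfolding P_def by simp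
  define y where "y = P (q - p0)"
  have y0: "y \<noteq> 0"
  proof
    assume "y = 0"
    then have "q - p0 = (u \<bullet> (q - p0)) *\<^sub>R u" using P_zero y_def by simp
    then have "q \<in> fline V p0" unfolding fline_def u_def
      by (auto intro!: exI[of _ "u \<bullet> (q - p0)"] simp: u_def algebra_simps)
    then show False using fl ne by blast
  qed
  have yD: "y \<in> range D" unfolding rangeD y_def using P_orth by simp
  define \<tau> where "\<tau> = 4 * norm y + 1"
  have tau0: "\<tau> > 0" unfolding \<tau>_def by (simp add: add_nonneg_pos)
  have tau: "\<tau> > 0" "norm y / \<tau> \<le> 1/4" using tau0 unfolding \<tau>_def by (auto simp: field_simps)
  define \<epsilon> where "\<epsilon> = 1 / (4 * KR)"
  have eps: "\<epsilon> > 0" using KR by (simp add: \<epsilon>_def)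
  obtain \<delta> where dpos: "\<delta> > 0" and dest:
      "\<And>x. norm (x - p0) < \<delta> \<Longrightarrow> norm (V x - V p0 - D (x - p0)) \<le> \<epsilon> * norm (x - p0)"
    using dV eps unfolding has_derivative_at_alt by blast
  define c where "c = min \<delta> (min (\<tau>/4) (norm y)) / 2"
  have cpos: "c > 0" using dpos tau y0 unfolding c_def by simp
  define s where "s = c / KR"
  have spos: "s > 0" using cpos KR by (simp add: s_def)
  have sKR: "s * KR < \<delta>" "s * KR \<le> \<tau> / 4" "s * KR < norm y"
    proof -
    have "s * KR = c" unfolding s_def using KR by simp
    moreover have "norm y > 0" using y0 by simp
    ultimately show "s * KR < \<delta>" "s * KR \<le> \<tau> / 4" "s * KR < norm y"
    proof -
      have aux: "\<And>a b c m::real. a>0 \<Longrightarrow> b>0 \<Longrightarrow> c>0 \<Longrightarrow> m = min a (min b c)/2 \<Longrightarrow> m < a \<and> m \<le> b \<and> m < c"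
        by (auto simp: min_def split: if_splits)
      have "\<tau>/4 > 0" using tau by simp
      then show "s * KR < \<delta>" "s * KR \<le> \<tau> / 4" "s * KR < norm y"
        using aux[OF dpos _ \<open>norm y > 0\<close>, of "\<tau>/4" "s*KR"] \<open>s * KR = c\<close> unfolding c_def by auto
    qed
  qed
  define \<Psi> where "\<Psi> = (\<lambda>z. P (s *\<^sub>R R z + (\<tau>/s) *\<^sub>R V (p0 + s *\<^sub>R R z)))"
  define H where "H = (\<lambda>z. (1/\<tau>) *\<^sub>R (y - \<Psi> z) + z)"
  define S where "S = range D \<inter> cball 0 1"
  have "compact S" unfolding S_def
    using closed_subspace[of "range D"] linD
    by (simp add: compact_Int_closed compact_cball Int_commute subspace_UNIV linear_subspace_image)
  moreover have "convex S" unfolding S_def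
    using linD by (intro convex_Int convex_cball subspace_imp_convex) (simp add: subspace_UNIV linear_subspace_image)
  moreover have "S \<noteq> {}" unfolding S_def using linear_0[OF linD] by (metis IntI centre_in_cball empty_iff rangeI zero_less_one order.strict_implies_order)
  moreover have "continuous_on S H"
  proof -
    have cV: "continuous_on UNIV V" using V_cont[OF lfib] .
    have cR: "continuous_on UNIV R" using linR by (simp add: linear_continuous_on linear_linear)
    have cP: "continuous_on UNIV P" unfolding P_def by (intro continuous_intros)
    have "continuous_on UNIV (\<lambda>z. V (p0 + s *\<^sub>R R z))"
      by (rule continuous_on_compose2[OF cV]) (auto intro!: continuous_intros cR)
    then have "continuous_on UNIV \<Psi>" unfolding \<Psi>_def
      by (intro continuous_on_compose2[OF cP]) (auto intro!: continuous_intros cR)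
    then show ?thesis unfolding H_def by (auto intro!: continuous_intros elim: continuous_on_subset)
  qed
  moreover have key: "\<And>z. z \<in> range D \<Longrightarrow> norm z \<le> 1 \<Longrightarrow>
      \<Psi> z = P (s *\<^sub>R R z) + \<tau> *\<^sub>R z + (\<tau>/s) *\<^sub>R P (V (p0 + s *\<^sub>R R z) - u - D (s *\<^sub>R R z))"
  proof -
    fix z assume z: "z \<in> range D"
    have Dh: "D (s *\<^sub>R R z) = s *\<^sub>R z" using RD[OF z] linear_scale[OF linD] by simp
    have PDh: "P (D (s *\<^sub>R R z)) = D (s *\<^sub>R R z)" using ortho by (simp add: P_fix)
    have "V (p0 + s *\<^sub>R R z) = u + D (s *\<^sub>R R z) + (V (p0 + s *\<^sub>R R z) - u - D (s *\<^sub>R R z))" by simp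
    then have "P (V (p0 + s *\<^sub>R R z)) = P u + P (D (s *\<^sub>R R z)) + P (V (p0 + s *\<^sub>R R z) - u - D (s *\<^sub>R R z))"
      by (metis P_add)
    then have "P (V (p0 + s *\<^sub>R R z)) = s *\<^sub>R z + P (V (p0 + s *\<^sub>R R z) - u - D (s *\<^sub>R R z))"
      using P_u PDh Dh by simp
    then show "\<Psi> z = P (s *\<^sub>R R z) + \<tau> *\<^sub>R z + (\<tau>/s) *\<^sub>R P (V (p0 + s *\<^sub>R R z) - u - D (s *\<^sub>R R z))"
      unfolding \<Psi>_def using spos by (simp add: P_add P_scale scaleR_add_right)
  qed
  moreover have "H \<in> S \<rightarrow> S"
  proof
    fix z assume "z \<in> S"
    then have z: "z \<in> range D" "norm z \<le> 1" unfolding S_def by auto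
    define h where "h = s *\<^sub>R R z"
    define err where "err = V (p0 + h) - u - D h"
    have hn: "norm h \<le> s * KR" unfolding h_def using KR(2)[of z] z spos
      by (simp add: mult_left_mono) (smt (verit) mult_left_le mult_nonneg_nonneg KR(1))
    have errn: "norm err \<le> \<epsilon> * (s * KR)"
    proof -
      have "norm err \<le> \<epsilon> * norm h" unfolding err_def u_def using dest[of "p0 + h"] hn sKR by simp
      also have "\<dots> \<le> \<epsilon> * (s * KR)" using hn eps by (simp add: mult_left_mono)
      finally show ?thesis .
    qed
    have Hz: "H z = (1/\<tau>) *\<^sub>R y - (1/\<tau>) *\<^sub>R P h - (1/s) *\<^sub>R P err"
      unfolding H_def key[OF z] h_def[symmetric] err_def[symmetric] using tau spos
      by (simp add: algebra_simps)
    have "norm (H z) \<le> norm y / \<tau> + norm (P h) / \<tau> + norm (P err) / s"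
    proof -
      have "norm (H z) \<le> norm ((1/\<tau>) *\<^sub>R y - (1/\<tau>) *\<^sub>R P h) + norm ((1/s) *\<^sub>R P err)"
        unfolding Hz by (rule norm_triangle_ineq4)
      also have "\<dots> \<le> norm ((1/\<tau>) *\<^sub>R y) + norm ((1/\<tau>) *\<^sub>R P h) + norm ((1/s) *\<^sub>R P err)"
        by (rule add_right_mono[OF norm_triangle_ineq4])
      also have "\<dots> = norm y / \<tau> + norm (P h) / \<tau> + norm (P err) / s"
        using tau spos by simp
      finally show ?thesis .
    qed
    also have "\<dots> \<le> 1/4 + 1/4 + 1/4"
    proof -
      have a: "norm (P h) / \<tau> \<le> 1/4" using P_norm[of h] hn sKR tau by (simp add: divide_le_eq)
      have "norm (P err) / s \<le> \<epsilon> * KR" using P_norm[of err] errn spos by (simp add: divide_le_eq mult_ac)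
      moreover have "\<epsilon> * KR = 1/4" unfolding \<epsilon>_def using KR by simp
      ultimately show ?thesis using a tau by linarith
    qed
    finally have "norm (H z) \<le> 1" by simp
    moreover have "u \<bullet> H z = 0" unfolding H_def \<Psi>_def using P_orth yD z(1) rangeD
      by (simp add: inner_add_right inner_diff_right y_def)
    ultimately show "H z \<in> S" unfolding S_def rangeD by simp
  qed
  ultimately obtain z where zS: "z \<in> S" and fixz: "H z = z" using brouwer by metis
  have Psi: "\<Psi> z = y" using fixz tau unfolding H_def by simp
  define x where "x = p0 + s *\<^sub>R R z"
  define w where "w = x + (\<tau>/s) *\<^sub>R V x"
  have "P (w - p0) = y" using Psi unfolding \<Psi>_def w_def x_def by (simp add: algebra_simps)
  then have "P (w - q) = 0" unfolding y_def
  proof -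
    assume a: "P (w - p0) = P (q - p0)"
    have "w - q = (w - p0) - (q - p0)" by simp
    then show "P (w - q) = 0" using a P_diff by simp
  qed
  then have wq: "w - q = (u \<bullet> (w - q)) *\<^sub>R u" by (rule P_zero)
  have "\<exists>t. w = q + t *\<^sub>R V q"
    using par unfolding parallel_dirs_def u_def[symmetric]
  proof
    assume "V q = u"
    then show "\<exists>t. w = q + t *\<^sub>R V q" using wq by (metis add.commute diff_add_cancel)
  next
    assume "V q = - u"
    then show "\<exists>t. w = q + t *\<^sub>R V q"
    proof -
      assume vq: "V q = - u"
      have "q + (- (u \<bullet> (w - q))) *\<^sub>R V q = q + (w - q)" using vq wq by simp
      then show ?thesis by (intro exI[of _ "- (u \<bullet> (w - q))"]) simp
    qed
  qed
  then have "w \<in> fline V q" unfolding fline_def by auto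
  then have e1: "fline V w = fline V q" by (rule fl)
  have "w \<in> fline V x" unfolding fline_def w_def by auto
  then have e2: "fline V w = fline V x" by (rule fl)
  have "x \<in> fline V x" unfolding fline_def by (auto intro!: exI[of _ 0])
  then have "x \<in> fline V q" using e1 e2 by simp
  then obtain t where "x = q + t *\<^sub>R V q" unfolding fline_def by auto
  moreover have "P (V q) = 0" using par P_u P_scale[of "-1" u] unfolding parallel_dirs_def u_def by auto
  ultimately have "P (x - q) = 0" using P_scale by simp
  then have "P (x - p0) = y" unfolding y_def
  proof -
    assume a: "P (x - q) = 0"
    have "P (x - p0) = P ((x - q) + (q - p0))" by simp
    also have "\<dots> = P (x - q) + P (q - p0)" by (rule P_add)
    finally show "P (x - p0) = P (q - p0)" using a by simp
  qed
  moreover have "norm (x - p0) \<le> s * KR" unfolding x_def using KR(2)[of z] zS spos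
    unfolding S_def by (simp add: mult_left_mono) (smt (verit) mult_left_le mult_nonneg_nonneg KR(1))
  ultimately show False using P_norm[of "x - p0"] sKR(3) by simp
qed

theorem mainTheorem2:
  fixes V :: "real^3 \<Rightarrow> real^3"
  assumes "line_fibration V"
  shows "(\<forall>p0 D. (V has_derivative D) (at p0) \<and> dim (range D) = 2 \<longrightarrow>
            \<not> (\<exists>q. fline V q \<noteq> fline V p0 \<and> parallel_dirs (V q) (V p0)))
       \<and> ((\<forall>p. \<exists>D. (V has_derivative D) (at p) \<and> dim (range D) = 2) \<longrightarrow>
            (\<forall>p q. fline V p \<noteq> fline V q \<longrightarrow> \<not> parallel_dirs (V p) (V q)))"
  using no_parallel[OF assms] by metis

end
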